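(* In the homogeneous setting of the context, let $\gamma>0$ and assume $D_1E^\top=0$, $D_2^\top C_2=0$, $D_1D_1^\top=I_r$, $D_2^\top D_2=I_m$. Let $F\in\mathbb{R}^{m\times n}$ and suppose there exist $P_i>0$ ($i=1,\dots,M$) and $Q>0$ such that for all $i$ $$(A+\lambda_iBF)^\top P_i+P_i(A+\lambda_iBF)+(\lambda_i^2C_2+\lambda_i^2D_2F)^\top(\lambda_i^2C_2+\lambda_i^2D_2F)<0,$$ $$AQ+QA^\top-QC_1^\top C_1Q+\tfrac{1}{\lambda_1^2}EE^\top<0,$$ and $$\sum_{i=1}^M\Big[\operatorname{tr}(C_1QP_iQC_1^\top)+\lambda_i^4\operatorname{tr}(C_2QC_2^\top)\Big]<\gamma.$$ Then with $F$ and $G=-QC_1^\top$, all matrices $\tilde A_i$, $i=1,\dots,M$, are Hurwitz (the auxiliary closed-loop systems are internally stable) and $\sum_{i=1}^M J_i(F,G)<\gamma$.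
   Context: Homogeneous setting: $A\in\mathbb{R}^{n\times n}$, $B\in\mathbb{R}^{n\times m}$, $E\in\mathbb{R}^{n\times q}$, $C_1\in\mathbb{R}^{r\times n}$, $D_1\in\mathbb{R}^{r\times q}$, $C_2\in\mathbb{R}^{p\times n}$, $D_2\in\mathbb{R}^{p\times m}$, $(A,B)$ stabilizable, $(C_1,A)$ detectable. $0<\lambda_1\le\dots\le\lambda_M$ are the eigenvalues of a symmetric positive definite matrix $L_1$ (the follower block of the graph Laplacian). Auxiliary closed-loop systems ($i=1,\dots,M$), with $F\in\mathbb{R}^{m\times n}$, $G\in\mathbb{R}^{n\times r}$: state matrix $\tilde A_i=\begin{bmatrix}A&\lambda_iBF\\ -GC_1&A+GC_1+\lambda_iBF\end{bmatrix}$, input matrix $\tilde E_i=\begin{bmatrix}\frac{1}{\lambda_1}E\\-GD_1\end{bmatrix}$, output matrix $\tilde C_i=\begin{bmatrix}\lambda_i^2C_2&\lambda_i^2D_2F\end{bmatrix}$; $J_i(F,G)=\int_0^\infty\operatorname{tr}[\tilde T_i(t)^\top\tilde T_i(t)]dt$ with $\tilde T_i(t)=\tilde C_ie^{\tilde A_it}\tilde E_i$. (These arise from the auxiliary systems $\dot{\tilde\xi}_i=A\tilde\xi_i+\lambda_iB\tilde u_i+\frac1{\lambda_1}E\tilde d_i$, $\tilde\zeta_i=C_1\tilde\xi_i+D_1\tilde d_i$, $\tilde\epsilon_i=\lambda_i^2C_2\tilde\xi_i+\lambda_i^2D_2\tilde u_i$ with controller $\dot{\tilde w}_i=A\tilde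 w_i+\lambda_iB\tilde u_i+G(C_1\tilde w_i-\tilde\zeta_i)$, $\tilde u_i=F\tilde w_i$.) Hurwitz means all eigenvalues have negative real part. *)

theory Defs
  imports "HOL-Analysis.Analysis"
begin

text \<open>Matrices are Cartesian matrices: an a x b real matrix is real^'b^'a (rows indexed by 'a).\<close>

definition cmat :: "real^'c^'r \<Rightarrow> complex^'c^'r" where
  "cmat X = (\<chi> i j. complex_of_real (X $ i $ j))"

definition hurwitz :: "real^'n^'n \<Rightarrow> bool" where
  "hurwitz X \<longleftrightarrow> (\<forall>(z::complex) (v::complex^'n). v \<noteq> 0 \<and> cmat X *v v = z *s v \<longrightarrow> Re z < 0)"

definition stabilizable :: "real^'n^'n \<Rightarrow> real^'m^'n \<Rightarrow> bool" where
  "stabilizable A B \<longleftrightarrow> (\<exists>K::real^'n^'m. hurwitz (A + B ** K))"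

definition detectable :: "real^'n^'r \<Rightarrow> real^'n^'n \<Rightarrow> bool" where
  "detectable C A \<longleftrightarrow> (\<exists>L::real^'r^'n. hurwitz (A + L ** C))"

definition posdef :: "real^'n^'n \<Rightarrow> bool" where
  "posdef X \<longleftrightarrow> transpose X = X \<and> (\<forall>x. x \<noteq> 0 \<longrightarrow> x \<bullet> (X *v x) > 0)"

definition negdef :: "real^'n^'n \<Rightarrow> bool" where
  "negdef X \<longleftrightarrow> posdef (- X)"

fun mpow :: "real^'n^'n \<Rightarrow> nat \<Rightarrow> real^'n^'n" where
  "mpow X 0 = mat 1"
| "mpow X (Suc k) = X ** mpow X k"

definition mexp :: "real^'n^'n \<Rightarrow> real^'n^'n" where
  "mexp X = (\<Sum>k. (1 / fact k) *\<^sub>R mpow X k)"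

definition blk :: "real^'b^'a \<Rightarrow> real^'d^'a \<Rightarrow> real^'b^'c \<Rightarrow> real^'d^'c \<Rightarrow> real^('b+'d)^('a+'c)" where
  "blk X11 X12 X21 X22 = (\<chi> i j. case i of
      Inl a \<Rightarrow> (case j of Inl b \<Rightarrow> X11 $ a $ b | Inr d \<Rightarrow> X12 $ a $ d)
    | Inr c \<Rightarrow> (case j of Inl b \<Rightarrow> X21 $ c $ b | Inr d \<Rightarrow> X22 $ c $ d))"

definition vblk :: "real^'b^'a \<Rightarrow> real^'b^'c \<Rightarrow> real^'b^('a+'c)" where
  "vblk X1 X2 = (\<chi> i. case i of Inl a \<Rightarrow> X1 $ a | Inr c \<Rightarrow> X2 $ c)"

definition hblk :: "real^'b^'a \<Rightarrow> real^'d^'a \<Rightarrow> real^('b+'d)^'a" where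
  "hblk X1 X2 = (\<chi> i j. case j of Inl b \<Rightarrow> X1 $ i $ b | Inr d \<Rightarrow> X2 $ i $ d)"

text \<open>Closed-loop matrices of the i-th auxiliary system (lam = lambda_i, lam1 = lambda_1).\<close>
definition Atil :: "real^'n^'n \<Rightarrow> real^'m^'n \<Rightarrow> real^'n^'r \<Rightarrow> real^'n^'m \<Rightarrow> real^'r^'n \<Rightarrow> real
    \<Rightarrow> real^('n+'n)^('n+'n)" where
  "Atil A B C1 F G lam = blk A (lam *\<^sub>R (B ** F)) (- (G ** C1)) (A + G ** C1 + lam *\<^sub>R (B ** F))"

definition Etil :: "real^'q^'n \<Rightarrow> real^'q^'r \<Rightarrow> real^'r^'n \<Rightarrow> real \<Rightarrow> real^'q^('n+'n)" where
  "Etil E D1 G lam1 = vblk ((1 / lam1) *\<^sub>R E) (- (G ** D1))"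

definition Ctil :: "real^'n^'p \<Rightarrow> real^'m^'p \<Rightarrow> real^'n^'m \<Rightarrow> real \<Rightarrow> real^('n+'n)^'p" where
  "Ctil C2 D2 F lam = hblk ((lam^2) *\<^sub>R C2) ((lam^2) *\<^sub>R (D2 ** F))"

text \<open>J_i(F,G) = integral over [0,oo) of tr(T_i(t)^T T_i(t)), T_i(t) = C_i e^(A_i t) E_i,
  as a nonnegative (possibly infinite) Lebesgue integral.\<close>
definition Jcost :: "real^'n^'n \<Rightarrow> real^'m^'n \<Rightarrow> real^'q^'n \<Rightarrow> real^'n^'r \<Rightarrow> real^'q^'r
    \<Rightarrow> real^'n^'p \<Rightarrow> real^'m^'p \<Rightarrow> real^'n^'m \<Rightarrow> real^'r^'n \<Rightarrow> real \<Rightarrow> real \<Rightarrow> ennreal" where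
  "Jcost A B E C1 D1 C2 D2 F G lam1 lam =
     (\<integral>\<^sup>+ t\<in>{0..}. ennreal (trace (transpose
        (Ctil C2 D2 F lam ** mexp (t *\<^sub>R Atil A B C1 F G lam) ** Etil E D1 G lam1)
      ** (Ctil C2 D2 F lam ** mexp (t *\<^sub>R Atil A B C1 F G lam) ** Etil E D1 G lam1))) \<partial>lborel)"

end

theory Submission
  imports Defs
begin

lemma mpow_Suc': "mpow X (Suc k) = mpow X k ** X"
  by (induction k) (simp_all add: matrix_mul_assoc)

lemma mpow_scaleR: "mpow (t *\<^sub>R X) k = (t ^ k) *\<^sub>R mpow X k"
  by (induction k) (simp_all add: scalar_matrix_assoc[symmetric] matrix_scalar_ac)

lemma abs_mmult_le:
  fixes X Y :: "real^'n^'n"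
  assumes "\<And>i j. \<bar>X$i$j\<bar> \<le> a" "\<And>i j. \<bar>Y$i$j\<bar> \<le> b"
  shows "\<bar>(X ** Y)$i$j\<bar> \<le> real CARD('n) * a * b"
proof -
  have "\<bar>(X ** Y)$i$j\<bar> = \<bar>\<Sum>k\<in>UNIV. X$i$k * Y$k$j\<bar>" by (simp add: matrix_matrix_mult_def)
  also have "\<dots> \<le> (\<Sum>k\<in>(UNIV::'n set). \<bar>X$i$k * Y$k$j\<bar>)" by (rule sum_abs)
  also have "\<dots> \<le> (\<Sum>k\<in>(UNIV::'n set). a * b)"
    proof (intro sum_mono)
    fix k
    have "0 \<le> a" using assms(1)[of i k] by linarith
    then show "\<bar>X$i$k * Y$k$j\<bar> \<le> a * b"
      unfolding abs_mult by (intro mult_mono assms) auto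
  qed
  finally show ?thesis by simp
qed

lemma mpow_bound:
  fixes X :: "real^'n^'n"
  obtains c where "c \<ge> 1" "\<And>k i j. \<bar>mpow X k $ i $ j\<bar> \<le> c ^ k"
proof -
  define m where "m = (\<Sum>i\<in>UNIV. \<Sum>j\<in>UNIV. \<bar>X$i$j\<bar>)"
  have mX: "\<bar>X$i$j\<bar> \<le> m" for i j
  proof -
    have "\<bar>X$i$j\<bar> \<le> (\<Sum>j\<in>UNIV. \<bar>X$i$j\<bar>)"
      by (rule member_le_sum) auto
    also have "\<dots> \<le> m" unfolding m_def
      by (rule member_le_sum[where f="\<lambda>i. \<Sum>j\<in>UNIV. \<bar>X$i$j\<bar>"]) (auto intro: sum_nonneg)
    finally show ?thesis .
  qed
  have m0: "m \<ge> 0" using mX[of undefined undefined] by linarith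
  define c where "c = real CARD('n) * m + 1"
  have c1: "c \<ge> 1" unfolding c_def using m0 by simp
  have "\<bar>mpow X k $ i $ j\<bar> \<le> c ^ k" for k i j
  proof (induction k arbitrary: i j)
    case 0 then show ?case by (simp add: mat_def)
  next
    case (Suc k)
    have "\<bar>mpow X (Suc k) $ i $ j\<bar> \<le> real CARD('n) * m * c^k"
      by (simp only: mpow.simps) (rule abs_mmult_le[OF mX Suc.IH])
    also have "\<dots> \<le> c * c^k" unfolding c_def using m0 c1
      by (intro mult_right_mono) auto
    finally show ?case by simp
  qed
  with c1 show ?thesis using that by blast
qed

definition cf :: "real^'n^'n \<Rightarrow> 'n \<Rightarrow> 'n \<Rightarrow> nat \<Rightarrow> real" where
  "cf X i j k = mpow X k $ i $ j / fact k"

lemma cf_summable: "summable (\<lambda>k. cf X i j k * y ^ k)"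
proof -
  obtain c where c: "c \<ge> 1" "\<And>k i j. \<bar>mpow X k $ i $ j\<bar> \<le> c ^ k"
    by (rule mpow_bound[of X]) blast
  show ?thesis
  proof (rule summable_comparison_test'[OF summable_exp[of "c * \<bar>y\<bar>"]])
    fix k :: nat
    have "norm (cf X i j k * y ^ k) = \<bar>mpow X k $ i $ j\<bar> * \<bar>y\<bar>^k / fact k"
      by (simp add: cf_def abs_mult power_abs)
    also have "\<dots> \<le> c^k * \<bar>y\<bar>^k / fact k"
      by (intro divide_right_mono mult_right_mono c) auto
    also have "\<dots> = inverse (fact k) * (c * \<bar>y\<bar>) ^ k"
      by (simp add: power_mult_distrib field_simps)
    finally show "norm (cf X i j k * y ^ k) \<le> inverse (fact k) * (c * \<bar>y\<bar>) ^ k" .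
  qed
qed

lemma mexp_sums: "(\<lambda>k. (1 / fact k) *\<^sub>R mpow Y k) sums (\<chi> i j. \<Sum>k. cf Y i j k)"
proof -
  have s: "summable (\<lambda>k. cf Y i j k)" for i j
    using cf_summable[of Y i j 1] by simp
  show ?thesis
    unfolding sums_def
  proof (rule vec_tendstoI, rule vec_tendstoI)
    fix i j
    have "(\<lambda>n. (\<Sum>k<n. (1 / fact k) *\<^sub>R mpow Y k) $ i $ j) = (\<lambda>n. \<Sum>k<n. cf Y i j k)"
      by (simp add: cf_def)
    then show "((\<lambda>n. (\<Sum>k<n. (1 / fact k) *\<^sub>R mpow Y k) $ i $ j) \<longlongrightarrow> (\<chi> i j. \<Sum>k. cf Y i j k) $ i $ j) sequentially"
      using summable_LIMSEQ[OF s[of i j]] by simp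
  qed
qed

lemma mexp_entry: "mexp Y $ i $ j = (\<Sum>k. cf Y i j k)"
proof -
  have "mexp Y = (\<chi> i j. \<Sum>k. cf Y i j k)"
    unfolding mexp_def using sums_unique[OF mexp_sums[of Y]] by simp
  then show ?thesis by simp
qed

lemma cf_scaleR: "cf (t *\<^sub>R X) i j k = cf X i j k * t ^ k"
  by (simp add: cf_def mpow_scaleR)

lemma mexp_scaleR_entry: "mexp (t *\<^sub>R X) $ i $ j = (\<Sum>k. cf X i j k * t ^ k)"
  by (simp add: mexp_entry cf_scaleR)

lemma diffs_cf: "diffs (cf X i j) k = cf X i j (Suc k) * real (Suc k)"
  by (simp add: diffs_def)

lemma vec_vec_deriv:
  fixes f :: "real \<Rightarrow> real^'n^'m"
  assumes "\<And>i j. ((\<lambda>t. f t $ i $ j) has_real_derivative D $ i $ j) (at t within S)"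
  shows "(f has_vector_derivative D) (at t within S)"
  unfolding has_vector_derivative_def
proof (subst has_derivative_componentwise_within, intro ballI)
  fix b :: "real^'n^'m" assume "b \<in> Basis"
  then obtain i j where b: "b = axis i (axis j 1)"
    by (auto simp: Basis_vec_def)
  have "((\<lambda>t. f t $ i $ j) has_derivative (\<lambda>h. h * D $ i $ j)) (at t within S)"
  proof -
    have eq: "(*) (D$i$j) = (\<lambda>h. h * D$i$j)" by (rule ext) simp
    show ?thesis using has_field_derivative_imp_has_derivative[OF assms[of i j]] unfolding eq .
  qed
  then show "((\<lambda>x. f x \<bullet> b) has_derivative (\<lambda>x. x *\<^sub>R D \<bullet> b)) (at t within S)"
    unfolding b by (simp add: inner_axis)
qed

lemma mexp_entry_deriv:
  "((\<lambda>t. mexp (t *\<^sub>R X) $ i $ j) has_real_derivative (\<Sum>k. diffs (cf X i j) k * t^k)) (at t)"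
  unfolding mexp_scaleR_entry
  by (rule termdiffs_strong_converges_everywhere) (rule cf_summable)

lemma diffs_cf0: "diffs (cf X i j) k = mpow X (Suc k) $ i $ j / fact k"
proof -
  have "diffs (cf X i j) k = real (Suc k) * (mpow X (Suc k) $ i $ j / (real (Suc k) * fact k))"
    unfolding diffs_def cf_def fact_Suc by simp
  also have "\<dots> = mpow X (Suc k) $ i $ j / fact k"
    by (simp del: of_nat_Suc mpow.simps)
  finally show ?thesis .
qed

lemma diffs_cf_left: "diffs (cf X i j) k * t^k = (\<Sum>l\<in>UNIV. X $ i $ l * (cf X l j k * t^k))"
  unfolding diffs_cf0 mpow.simps
  by (simp add: cf_def matrix_matrix_mult_def sum_divide_distrib sum_distrib_left sum_distrib_right mult_ac)

lemma diffs_cf_right: "diffs (cf X i j) k * t^k = (\<Sum>l\<in>UNIV. (cf X i l k * t^k) * X $ l $ j)"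
  unfolding diffs_cf0 mpow_Suc'
  by (simp add: cf_def matrix_matrix_mult_def sum_divide_distrib sum_distrib_left sum_distrib_right mult_ac)

lemma mexp_deriv_left:
  "((\<lambda>t. mexp (t *\<^sub>R X)) has_vector_derivative X ** mexp (t *\<^sub>R X)) (at t within S)"
proof (rule vec_vec_deriv)
  fix i j
  have "(\<Sum>k. diffs (cf X i j) k * t^k) = (\<Sum>k. \<Sum>l\<in>UNIV. X $ i $ l * (cf X l j k * t^k))"
    by (simp add: diffs_cf_left)
  also have "\<dots> = (\<Sum>l\<in>UNIV. \<Sum>k. X $ i $ l * (cf X l j k * t^k))"
    by (rule suminf_sum) (intro summable_mult cf_summable)
  also have "\<dots> = (X ** mexp (t *\<^sub>R X)) $ i $ j"
    by (simp add: matrix_matrix_mult_def mexp_scaleR_entry suminf_mult cf_summable)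
  finally show "((\<lambda>t. mexp (t *\<^sub>R X) $ i $ j) has_real_derivative (X ** mexp (t *\<^sub>R X)) $ i $ j) (at t within S)"
    using mexp_entry_deriv[of X i j t] by (metis has_field_derivative_at_within)
qed

lemma mexp_deriv_right:
  "((\<lambda>t. mexp (t *\<^sub>R X)) has_vector_derivative mexp (t *\<^sub>R X) ** X) (at t within S)"
proof (rule vec_vec_deriv)
  fix i j
  have "(\<Sum>k. diffs (cf X i j) k * t^k) = (\<Sum>k. \<Sum>l\<in>UNIV. (cf X i l k * t^k) * X $ l $ j)"
    by (simp add: diffs_cf_right)
  also have "\<dots> = (\<Sum>l\<in>UNIV. \<Sum>k. (cf X i l k * t^k) * X $ l $ j)"
    by (rule suminf_sum) (intro summable_mult2 cf_summable)
  also have "\<dots> = (mexp (t *\<^sub>R X) ** X) $ i $ j"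
    by (simp add: matrix_matrix_mult_def mexp_scaleR_entry suminf_mult2 cf_summable)
  finally show "((\<lambda>t. mexp (t *\<^sub>R X) $ i $ j) has_real_derivative (mexp (t *\<^sub>R X) ** X) $ i $ j) (at t within S)"
    using mexp_entry_deriv[of X i j t] by (metis has_field_derivative_at_within)
qed

lemma mexp_zero: "mexp (0::real^'n^'n) = mat 1"
proof -
  have "mexp (0::real^'n^'n) $ i $ j = mat 1 $ i $ j" for i j
  proof -
    have e: "mexp (0::real^'n^'n) $ i $ j = (\<Sum>k. cf 0 i j k * 0 ^ k)"
      using mexp_scaleR_entry[of 0 "0::real^'n^'n" i j] by simp
    have "(\<Sum>k. cf (0::real^'n^'n) i j k * 0 ^ k) = (\<Sum>k\<in>{0}. cf 0 i j k * 0 ^ k)"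
      by (rule suminf_finite) auto
    then show ?thesis using e by (simp add: cf_def)
  qed
  then show ?thesis by (simp add: vec_eq_iff)
qed

lemma mm_add_left: "((A::real^'n^'m) + B) ** C = A ** C + B ** C"
  by (simp add: matrix_matrix_mult_def vec_eq_iff sum.distrib algebra_simps)
lemma mm_add_right: "(A::real^'n^'m) ** (B + C) = A ** B + A ** C"
  by (simp add: matrix_matrix_mult_def vec_eq_iff sum.distrib algebra_simps)
lemma mm_diff_left: "((A::real^'n^'m) - B) ** C = A ** C - B ** C"
  by (simp add: matrix_matrix_mult_def vec_eq_iff sum_subtractf algebra_simps)
lemma mm_diff_right: "(A::real^'n^'m) ** (B - C) = A ** B - A ** C"
  by (simp add: matrix_matrix_mult_def vec_eq_iff sum_subtractf algebra_simps)
lemma mm_uminus_left: "(- (A::real^'n^'m)) ** C = - (A ** C)"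
  by (simp add: matrix_matrix_mult_def vec_eq_iff sum_negf)
lemma mm_uminus_right: "(A::real^'n^'m) ** (- C) = - (A ** C)"
  by (simp add: matrix_matrix_mult_def vec_eq_iff sum_negf)
lemma mm_zero_left[simp]: "(0::real^'n^'m) ** C = 0"
  by (simp add: matrix_matrix_mult_def vec_eq_iff)
lemma mm_zero_right[simp]: "(A::real^'n^'m) ** 0 = 0"
  by (simp add: matrix_matrix_mult_def vec_eq_iff)
lemma mm_scaleR_left: "(c *\<^sub>R (A::real^'n^'m)) ** C = c *\<^sub>R (A ** C)"
  by (simp add: scalar_matrix_assoc)
lemma mm_scaleR_right: "(A::real^'n^'m) ** (c *\<^sub>R C) = c *\<^sub>R (A ** C)"
  by (simp add: matrix_scalar_ac scalar_matrix_assoc)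

lemma transpose_add: "transpose ((A::real^'n^'m) + B) = transpose A + transpose B"
  by (simp add: transpose_def vec_eq_iff)
lemma transpose_diff: "transpose ((A::real^'n^'m) - B) = transpose A - transpose B"
  by (simp add: transpose_def vec_eq_iff)
lemma transpose_uminus: "transpose (- (A::real^'n^'m)) = - transpose A"
  by (simp add: transpose_def vec_eq_iff)
lemma transpose_zero[simp]: "transpose (0::real^'n^'m) = 0"
  by (simp add: transpose_def vec_eq_iff)

lemma trace_scaleR: "trace (c *\<^sub>R (A::real^'n^'n)) = c * trace A"
  by (simp add: trace_def sum_distrib_left)
lemma trace_uminus: "trace (- (A::real^'n^'n)) = - trace A"
  by (simp add: trace_def sum_negf)

lemma bb_mm: "bounded_bilinear ((**) :: real^'n^'m \<Rightarrow> real^'p^'n \<Rightarrow> real^'p^'m)"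
  unfolding bilinear_conv_bounded_bilinear[symmetric] bilinear_def
  by (auto intro!: linearI simp: mm_add_left mm_add_right mm_scaleR_left mm_scaleR_right)

lemma bl_trace: "bounded_linear (trace :: real^'n^'n \<Rightarrow> real)"
  unfolding linear_conv_bounded_linear[symmetric]
  by (auto intro!: linearI simp: trace_add trace_scaleR)

lemma bl_transpose: "bounded_linear (transpose :: real^'n^'m \<Rightarrow> real^'m^'n)"
  unfolding linear_conv_bounded_linear[symmetric]
  by (auto intro!: linearI simp: transpose_add transpose_scalar)

lemma mm_deriv:
  fixes f :: "real \<Rightarrow> real^'n^'m" and g :: "real \<Rightarrow> real^'p^'n"
  assumes "(f has_vector_derivative f') (at x within s)" "(g has_vector_derivative g') (at x within s)"
  shows "((\<lambda>x. f x ** g x) has_vector_derivative (f x ** g' + f' ** g x)) (at x within s)"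
  by (rule bounded_bilinear.has_vector_derivative[OF bb_mm assms])

lemma lyap_deriv1:
  fixes C :: "real^'n^'p" and M S :: "real^'n^'n"
  shows "((\<lambda>t. C ** mexp (t *\<^sub>R M) ** S ** transpose (mexp (t *\<^sub>R M)) ** transpose C)
     has_vector_derivative
     (C ** mexp (t *\<^sub>R M) ** (M ** S + S ** transpose M) ** transpose (mexp (t *\<^sub>R M)) ** transpose C))
     (at t within T)"
proof -
  let ?E = "\<lambda>t. mexp (t *\<^sub>R M)"
  have dE: "(?E has_vector_derivative ?E t ** M) (at t within T)" by (rule mexp_deriv_right)
  have dET: "((\<lambda>t. transpose (?E t)) has_vector_derivative transpose (?E t ** M)) (at t within T)"
    by (rule bounded_linear.has_vector_derivative[OF bl_transpose dE])
  have dC: "((\<lambda>t. C) has_vector_derivative 0) (at t within T)" by (rule has_vector_derivative_const)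
  have dS: "((\<lambda>t. S) has_vector_derivative 0) (at t within T)" by (rule has_vector_derivative_const)
  have d: "((\<lambda>t. C ** ?E t ** S ** transpose (?E t) ** transpose C) has_vector_derivative
     (C ** ?E t ** S ** transpose (?E t) ** 0 + ((C ** ?E t ** S ** transpose (?E t ** M)) +
       ((C ** ?E t ** 0 + (C ** (?E t ** M) + 0 ** ?E t) ** S) ** transpose (?E t)))
        ** transpose C)) (at t within T)"
    by (intro mm_deriv dE dET dC dS has_vector_derivative_const)
  have "C ** ?E t ** S ** transpose (?E t) ** 0 + ((C ** ?E t ** S ** transpose (?E t ** M)) +
       ((C ** ?E t ** 0 + (C ** (?E t ** M) + 0 ** ?E t) ** S) ** transpose (?E t)))
        ** transpose C
     = C ** ?E t ** (M ** S + S ** transpose M) ** transpose (?E t) ** transpose C"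
    by (simp add: matrix_transpose_mul mm_add_left mm_add_right matrix_mul_assoc)
  with d show ?thesis by simp
qed

lemma lyap_deriv2:
  fixes C :: "real^'p^'n" and M S :: "real^'n^'n"
  shows "((\<lambda>t. transpose C ** transpose (mexp (t *\<^sub>R M)) ** S ** mexp (t *\<^sub>R M) ** C)
     has_vector_derivative
     (transpose C ** transpose (mexp (t *\<^sub>R M)) ** (transpose M ** S + S ** M) ** mexp (t *\<^sub>R M) ** C))
     (at t within T)"
proof -
  let ?E = "\<lambda>t. mexp (t *\<^sub>R M)"
  have dE: "(?E has_vector_derivative M ** ?E t) (at t within T)" by (rule mexp_deriv_left)
  have dET: "((\<lambda>t. transpose (?E t)) has_vector_derivative transpose (M ** ?E t)) (at t within T)"
    by (rule bounded_linear.has_vector_derivative[OF bl_transpose dE])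
  have dC: "((\<lambda>t. transpose C) has_vector_derivative 0) (at t within T)" by (rule has_vector_derivative_const)
  have dS: "((\<lambda>t. S) has_vector_derivative 0) (at t within T)" by (rule has_vector_derivative_const)
  have d: "((\<lambda>t. transpose C ** transpose (?E t) ** S ** ?E t ** C) has_vector_derivative
     (transpose C ** transpose (?E t) ** S ** ?E t ** 0 + ((transpose C ** transpose (?E t) ** S ** (M ** ?E t)) +
       ((transpose C ** transpose (?E t) ** 0 + (transpose C ** transpose (M ** ?E t) + 0 ** transpose (?E t)) ** S) ** ?E t))
        ** C)) (at t within T)"
    by (intro mm_deriv dE dET dC dS has_vector_derivative_const)
  have "transpose C ** transpose (?E t) ** S ** ?E t ** 0 + ((transpose C ** transpose (?E t) ** S ** (M ** ?E t)) +
       ((transpose C ** transpose (?E t) ** 0 + (transpose C ** transpose (M ** ?E t) + 0 ** transpose (?E t)) ** S) ** ?E t))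
        ** C
     = transpose C ** transpose (?E t) ** (transpose M ** S + S ** M) ** ?E t ** C"
    by (simp add: matrix_transpose_mul mm_add_left mm_add_right matrix_mul_assoc)
  with d show ?thesis by simp
qed

lemma trace_quad: "trace ((Y::real^'n^'m) ** S ** transpose Y) = (\<Sum>k\<in>UNIV. (Y$k) \<bullet> (S *v (Y$k)))"
  apply (simp add: trace_def matrix_matrix_mult_def transpose_def inner_vec_def matrix_vector_mult_def
      sum_distrib_left sum_distrib_right mult_ac)
  apply (rule sum.cong[OF refl])
  apply (subst sum.swap)
  apply (simp add: mult_ac)
  done

lemma trace_quad_nonneg:
  assumes "\<And>x. x \<bullet> (S *v x) \<ge> 0"
  shows "trace ((Y::real^'n^'m) ** S ** transpose Y) \<ge> 0"
  unfolding trace_quad by (intro sum_nonneg assms)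

lemma trace_quad_nonpos:
  assumes "\<And>x. x \<bullet> (S *v x) \<le> 0"
  shows "trace ((Y::real^'n^'m) ** S ** transpose Y) \<le> 0"
  unfolding trace_quad by (intro sum_nonpos assms)

lemma posdef_quad: "posdef S \<Longrightarrow> x \<bullet> (S *v x) \<ge> 0"
  unfolding posdef_def by (cases "x = 0") (auto intro: less_imp_le)

lemma negdef_quad: "negdef S \<Longrightarrow> x \<bullet> (S *v x) \<le> 0"
  using posdef_quad[of "- S" x] unfolding negdef_def
  by (simp add: matrix_vector_mult_def inner_vec_def sum_negf vec_eq_iff)

lemma sum_UNIV_Plus: "(\<Sum>x\<in>(UNIV::('a::finite + 'b::finite) set). f x) = (\<Sum>a\<in>UNIV. f (Inl a)) + (\<Sum>b\<in>UNIV. f (Inr b))"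
  by (subst UNIV_Plus_UNIV[symmetric], subst sum.Plus) (auto simp: comp_def)

lemma vec_sum_eqI:
  fixes X Y :: "real^'c^('a::finite+'b::finite)"
  assumes "\<And>a j. X $ Inl a $ j = Y $ Inl a $ j" "\<And>b j. X $ Inr b $ j = Y $ Inr b $ j"
  shows "X = Y"
proof -
  have "X $ i = Y $ i" for i
    by (cases i) (simp_all add: vec_eq_iff assms)
  then show ?thesis by (simp add: vec_eq_iff)
qed

lemma vec_sum_eqI2:
  fixes X Y :: "real^('c::finite+'d::finite)^'a"
  assumes "\<And>a j. X $ a $ Inl j = Y $ a $ Inl j" "\<And>a j. X $ a $ Inr j = Y $ a $ Inr j"
  shows "X = Y"
proof -
  have "X $ a $ j = Y $ a $ j" for a j
    by (cases j) (simp_all add: assms)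
  then show ?thesis by (simp add: vec_eq_iff)
qed

lemma vec_sum_eqI4:
  fixes X Y :: "real^('c::finite+'d::finite)^('a::finite+'b::finite)"
  assumes "\<And>a j. X $ Inl a $ Inl j = Y $ Inl a $ Inl j" "\<And>a j. X $ Inl a $ Inr j = Y $ Inl a $ Inr j"
    "\<And>a j. X $ Inr a $ Inl j = Y $ Inr a $ Inl j" "\<And>a j. X $ Inr a $ Inr j = Y $ Inr a $ Inr j"
  shows "X = Y"
proof -
  have "X $ a $ j = Y $ a $ j" for a j
    by (cases a; cases j) (simp_all add: assms)
  then show ?thesis by (simp add: vec_eq_iff)
qed

lemma blk_nth[simp]:
  "blk X11 X12 X21 X22 $ Inl a $ Inl b = X11 $ a $ b"
  "blk X11 X12 X21 X22 $ Inl a $ Inr d = X12 $ a $ d"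
  "blk X11 X12 X21 X22 $ Inr c $ Inl b = X21 $ c $ b"
  "blk X11 X12 X21 X22 $ Inr c $ Inr d = X22 $ c $ d"
  by (simp_all add: blk_def)

lemma vblk_nth[simp]: "vblk X1 X2 $ Inl a = X1 $ a" "vblk X1 X2 $ Inr c = X2 $ c"
  by (simp_all add: vblk_def)

lemma hblk_nth[simp]: "hblk X1 X2 $ i $ Inl b = X1 $ i $ b" "hblk X1 X2 $ i $ Inr d = X2 $ i $ d"
  by (simp_all add: hblk_def)

lemma blk_vblk: "blk a b c d ** vblk x y = vblk (a ** x + b ** y) (c ** x + d ** y)"
  by (rule vec_sum_eqI) (simp_all add: matrix_matrix_mult_def sum_UNIV_Plus)

lemma hblk_vblk: "hblk a b ** vblk x y = a ** x + b ** y"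
  by (simp add: matrix_matrix_mult_def sum_UNIV_Plus vec_eq_iff)

lemma vblk_hblk: "vblk x y ** hblk u v = blk (x ** u) (x ** v) (y ** u) (y ** v)"
  by (rule vec_sum_eqI4) (simp_all add: matrix_matrix_mult_def)

lemma vblk_mult: "vblk x y ** M = vblk (x ** M) (y ** M)"
  by (rule vec_sum_eqI) (simp_all add: matrix_matrix_mult_def)

lemma transpose_vblk: "transpose (vblk x y) = hblk (transpose x) (transpose y)"
  by (rule vec_sum_eqI2) (simp_all add: transpose_def)

lemma transpose_blk: "transpose (blk a b c d) = blk (transpose a) (transpose c) (transpose b) (transpose d)"
  by (rule vec_sum_eqI4) (simp_all add: transpose_def)

lemma blk_add: "blk a b c d + blk a' b' c' d' = blk (a + a') (b + b') (c + c') (d + d')"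
  by (rule vec_sum_eqI4) simp_all

lemma blk_diff: "blk a b c d - blk a' b' c' d' = blk (a - a') (b - b') (c - c') (d - d')"
  by (rule vec_sum_eqI4) simp_all

lemma blk_eqI: "a = a' \<Longrightarrow> b = b' \<Longrightarrow> c = c' \<Longrightarrow> d = d' \<Longrightarrow> blk a b c d = blk a' b' c' d'"
  by simp

lemma mpow_intertwine:
  fixes X :: "real^'a^'a" and J :: "real^'b^'a" and Y :: "real^'b^'b"
  assumes "X ** J = J ** Y"
  shows "mpow X k ** J = J ** mpow Y k"
proof (induction k)
  case 0 then show ?case by simp
next
  case (Suc k)
  have "mpow X (Suc k) ** J = X ** (mpow X k ** J)" by (simp add: matrix_mul_assoc)
  also have "\<dots> = (X ** J) ** mpow Y k" by (simp add: Suc matrix_mul_assoc)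
  also have "\<dots> = J ** mpow Y (Suc k)" by (simp add: assms matrix_mul_assoc)
  finally show ?case .
qed

lemma mexp_intertwine:
  fixes X :: "real^'a^'a" and J :: "real^'b^'a" and Y :: "real^'b^'b"
  assumes "X ** J = J ** Y"
  shows "mexp (t *\<^sub>R X) ** J = J ** mexp (t *\<^sub>R Y)"
proof -
  have "(mexp (t *\<^sub>R X) ** J) $ i $ j = (J ** mexp (t *\<^sub>R Y)) $ i $ j" for i j
  proof -
    have "(mexp (t *\<^sub>R X) ** J) $ i $ j = (\<Sum>l\<in>UNIV. (\<Sum>k. cf X i l k * t^k) * J $ l $ j)"
      by (simp add: matrix_matrix_mult_def mexp_scaleR_entry)
    also have "\<dots> = (\<Sum>l\<in>UNIV. \<Sum>k. cf X i l k * t^k * J $ l $ j)"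
      by (simp add: suminf_mult2 cf_summable)
    also have "\<dots> = (\<Sum>k. \<Sum>l\<in>UNIV. cf X i l k * t^k * J $ l $ j)"
      by (rule suminf_sum[symmetric]) (intro summable_mult2 cf_summable)
    also have "\<dots> = (\<Sum>k. (mpow X k ** J) $ i $ j / fact k * t^k)"
      by (simp add: cf_def matrix_matrix_mult_def sum_divide_distrib sum_distrib_left sum_distrib_right mult_ac)
    also have "\<dots> = (\<Sum>k. (J ** mpow Y k) $ i $ j / fact k * t^k)"
      by (simp add: mpow_intertwine[OF assms])
    also have "\<dots> = (\<Sum>k. \<Sum>l\<in>UNIV. J $ i $ l * (cf Y l j k * t^k))"
      by (simp add: cf_def matrix_matrix_mult_def sum_divide_distrib sum_distrib_left sum_distrib_right mult_ac)
    also have "\<dots> = (\<Sum>l\<in>UNIV. \<Sum>k. J $ i $ l * (cf Y l j k * t^k))"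
      by (rule suminf_sum) (intro summable_mult cf_summable)
    also have "\<dots> = (J ** mexp (t *\<^sub>R Y)) $ i $ j"
      by (simp add: matrix_matrix_mult_def mexp_scaleR_entry suminf_mult cf_summable)
    finally show ?thesis .
  qed
  then show ?thesis by (simp add: vec_eq_iff)
qed

lemma blk_blk: "blk a b c d ** blk e f g h = blk (a ** e + b ** g) (a ** f + b ** h) (c ** e + d ** g) (c ** f + d ** h)"
  by (rule vec_sum_eqI4) (simp_all add: matrix_matrix_mult_def sum_UNIV_Plus)

lemma key_identity:
  fixes A :: "real^'n^'n" and B :: "real^'m^'n" and E :: "real^'q^'n"
    and C1 :: "real^'n^'r" and D1 :: "real^'q^'r" and F :: "real^'n^'m" and Q :: "real^'n^'n"
  assumes D1E: "D1 ** transpose E = 0" and D1D1: "D1 ** transpose D1 = mat 1"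
    and Qs: "transpose Q = Q" and G: "G = - (Q ** transpose C1)"
  shows "Atil A B C1 F G lam ** blk Q 0 0 0 + blk Q 0 0 0 ** transpose (Atil A B C1 F G lam)
     = vblk G G ** transpose (vblk G G)
       + blk (A ** Q + Q ** transpose A - Q ** transpose C1 ** C1 ** Q + (1 / l1^2) *\<^sub>R (E ** transpose E)) 0 0 0
       - Etil E D1 G l1 ** transpose (Etil E D1 G l1)"
proof -
  have GT: "transpose G = - (C1 ** Q)" using Qs by (simp add: G transpose_uminus matrix_transpose_mul)
  have ED1: "E ** transpose D1 = 0"
    using arg_cong[OF D1E, of transpose] by (simp add: matrix_transpose_mul)
  have DE0: "X ** D1 ** transpose E = 0" for X :: "real^'r^'n"
    by (metis D1E matrix_mul_assoc mm_zero_right)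
  have DD1: "X ** D1 ** transpose D1 = X" for X :: "real^'r^'n"
    by (metis D1D1 matrix_mul_assoc matrix_mul_rid)
  show ?thesis
    unfolding Atil_def Etil_def transpose_vblk vblk_hblk blk_blk transpose_blk blk_add blk_diff
  proof (rule blk_eqI)
    show "A ** Q + lam *\<^sub>R (B ** F) ** 0 + (Q ** transpose A + 0 ** transpose (lam *\<^sub>R (B ** F))) =
      G ** transpose G + (A ** Q + Q ** transpose A - Q ** transpose C1 ** C1 ** Q + (1 / l1\<^sup>2) *\<^sub>R (E ** transpose E)) -
      (1 / l1) *\<^sub>R E ** transpose ((1 / l1) *\<^sub>R E)"
      by (simp add: G mm_uminus_left mm_uminus_right matrix_mul_assoc transpose_uminus matrix_transpose_mul Qs transpose_scalar mm_scaleR_left mm_scaleR_right power2_eq_square)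
  next
    show "A ** 0 + lam *\<^sub>R (B ** F) ** 0 + (Q ** transpose (- (G ** C1)) + 0 ** transpose (A + G ** C1 + lam *\<^sub>R (B ** F))) =
    G ** transpose G + 0 - (1 / l1) *\<^sub>R E ** transpose (- (G ** D1))"
      by (simp add: GT G mm_uminus_left mm_uminus_right matrix_mul_assoc transpose_uminus matrix_transpose_mul Qs
          mm_scaleR_left mm_scaleR_right ED1[unfolded matrix_mul_assoc])
  next
    show "- (G ** C1) ** Q + (A + G ** C1 + lam *\<^sub>R (B ** F)) ** 0 + (0 ** transpose A + 0 ** transpose (lam *\<^sub>R (B ** F))) =
    G ** transpose G + 0 - - (G ** D1) ** transpose ((1 / l1) *\<^sub>R E)"
      by (simp add: G mm_uminus_left mm_uminus_right matrix_mul_assoc transpose_uminus matrix_transpose_mul Qs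
          transpose_scalar mm_scaleR_left mm_scaleR_right ED1[unfolded matrix_mul_assoc] DE0)
  next
    show "- (G ** C1) ** 0 + (A + G ** C1 + lam *\<^sub>R (B ** F)) ** 0 + (0 ** transpose (- (G ** C1)) + 0 ** transpose (A + G ** C1 + lam *\<^sub>R (B ** F))) =
    G ** transpose G + 0 - - (G ** D1) ** transpose (- (G ** D1))"
      by (simp add: G mm_uminus_left mm_uminus_right matrix_mul_assoc transpose_uminus matrix_transpose_mul Qs
          DD1)
  qed
qed

lemma finite_bound:
  fixes h Fn D :: "real \<Rightarrow> real"
  assumes cont: "continuous_on UNIV h"
    and deriv: "\<And>t. (Fn has_real_derivative D t) (at t)"
    and Dle: "\<And>t. D t \<le> - h t" and F0: "\<And>t. Fn t \<ge> 0" and T: "0 \<le> T"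
  obtains I where "(h has_integral I) {0..T}" "I \<le> Fn 0"
proof -
  have ftc: "((\<lambda>t. - D t) has_integral (- Fn T - (- Fn 0))) {0..T}"
  proof (rule fundamental_theorem_of_calculus[OF T])
    fix x assume "x \<in> {0..T}"
    have "((\<lambda>t. - Fn t) has_real_derivative - D x) (at x within {0..T})"
      by (rule has_field_derivative_at_within) (intro DERIV_minus deriv)
    then show "((\<lambda>t. - Fn t) has_vector_derivative - D x) (at x within {0..T})"
      by (simp add: has_real_derivative_iff_has_vector_derivative)
  qed
  have hi: "(h has_integral integral {0..T} h) {0..T}"
    by (intro integrable_integral integrable_continuous_interval continuous_on_subset[OF cont]) auto
  have le: "h x \<le> - D x" for x using Dle[of x] by linarith
  have "integral {0..T} h \<le> - Fn T - (- Fn 0)"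
    by (rule has_integral_le[OF hi ftc]) (rule le)
  with F0[of T] have "integral {0..T} h \<le> Fn 0" by simp
  with hi show ?thesis by (rule that)
qed

lemma nn_bound:
  fixes h Fn D :: "real \<Rightarrow> real"
  assumes cont: "continuous_on UNIV h" and h0: "\<And>t. h t \<ge> 0"
    and deriv: "\<And>t. (Fn has_real_derivative D t) (at t)"
    and Dle: "\<And>t. D t \<le> - h t" and F0: "\<And>t. Fn t \<ge> 0"
  shows "(\<integral>\<^sup>+ t\<in>{0..}. ennreal (h t) \<partial>lborel) \<le> ennreal (Fn 0)"
proof -
  define u where "u n t = ennreal (h t) * indicator {0..real n} t" for n t
  have meas[measurable]: "h \<in> borel_measurable borel"
    by (rule borel_measurable_continuous_onI[OF cont])
  have inc: "incseq u"
    unfolding u_def incseq_def le_fun_def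
    by (auto intro!: mult_left_mono simp: indicator_def)
  have sup: "(SUP n. u n t) = ennreal (h t) * indicator {0..} t" for t
  proof (cases "t \<ge> 0")
    case True
    have "(SUP n. u n t) \<le> ennreal (h t)"
      by (rule SUP_least) (auto simp: u_def indicator_def)
    moreover have "u (nat \<lceil>t\<rceil>) t \<le> (SUP n. u n t)" by (rule SUP_upper) auto
    moreover have "u (nat \<lceil>t\<rceil>) t = ennreal (h t)"
      using True by (simp add: u_def indicator_def)
    ultimately show ?thesis using True by (simp add: indicator_def)
  next
    case False then show ?thesis by (simp add: u_def indicator_def)
  qed
  have "(\<integral>\<^sup>+ t\<in>{0..}. ennreal (h t) \<partial>lborel) = (\<integral>\<^sup>+ t. (SUP n. u n t) \<partial>lborel)"
    by (simp only: sup)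
  also have "\<dots> = (SUP n. integral\<^sup>N lborel (u n))"
    proof (rule nn_integral_monotone_convergence_SUP[OF inc])
    fix n
    have "(\<lambda>t. ennreal (h t)) \<in> borel_measurable lborel" using meas by simp
    then show "u n \<in> borel_measurable lborel"
      unfolding u_def by (intro borel_measurable_times_ennreal) auto
  qed
  also have "\<dots> \<le> ennreal (Fn 0)"
  proof (rule SUP_least)
    fix n
    obtain I where I: "(h has_integral I) {0..real n}" "I \<le> Fn 0"
      by (rule finite_bound[OF cont deriv Dle F0, of "real n"]) auto
    have "integral\<^sup>N lborel (u n) = ennreal I"
      unfolding u_def by (rule nn_integral_has_integral_lebesgue'[OF _ I(1)]) (simp add: h0)
    then show "integral\<^sup>N lborel (u n) \<le> ennreal (Fn 0)" using I(2) by (simp add: ennreal_leI)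
  qed
  finally show ?thesis .
qed

lemma mexp_cont: "continuous_on S (\<lambda>t. mexp (t *\<^sub>R (M::real^'n^'n)))"
  by (rule continuous_at_imp_continuous_on)
     (auto intro: has_vector_derivative_continuous[OF mexp_deriv_left])

lemma trace_deriv:
  fixes f :: "real \<Rightarrow> real^'n^'n"
  assumes "(f has_vector_derivative f') (at t)"
  shows "((\<lambda>t. trace (f t)) has_real_derivative trace f') (at t)"
  using bounded_linear.has_vector_derivative[OF bl_trace assms]
  by (simp add: has_real_derivative_iff_has_vector_derivative)

lemma cost_bound:
  fixes A :: "real^'n^'n" and B :: "real^'m^'n" and E :: "real^'q^'n"
    and C1 :: "real^'n^'r" and D1 :: "real^'q^'r"
    and C2 :: "real^'n^'p" and D2 :: "real^'m^'p"
    and F :: "real^'n^'m" and Q P :: "real^'n^'n" and G :: "real^'r^'n"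
  assumes D1E: "D1 ** transpose E = 0" and D1D1: "D1 ** transpose D1 = mat 1"
    and Qs: "transpose Q = Q" and G: "G = - (Q ** transpose C1)"
    and Qpsd: "\<And>x. x \<bullet> (Q *v x) \<ge> 0" and Ppsd: "\<And>x. x \<bullet> (P *v x) \<ge> 0"
    and L1: "\<And>x. x \<bullet> ((transpose (A + lam *\<^sub>R (B ** F)) ** P + P ** (A + lam *\<^sub>R (B ** F))
         + transpose ((lam)^2 *\<^sub>R C2 + (lam)^2 *\<^sub>R (D2 ** F))
           ** ((lam)^2 *\<^sub>R C2 + (lam)^2 *\<^sub>R (D2 ** F))) *v x) \<le> 0"
    and L2: "\<And>x. x \<bullet> ((A ** Q + Q ** transpose A - Q ** transpose C1 ** C1 ** Q
                        + (1 / l1^2) *\<^sub>R (E ** transpose E)) *v x) \<le> 0"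
  shows "Jcost A B E C1 D1 C2 D2 F G l1 lam \<le>
    ennreal (trace (transpose G ** P ** G) + trace (Ctil C2 D2 F lam ** blk Q 0 0 0 ** transpose (Ctil C2 D2 F lam)))"
proof -
  define AF where "AF = A + lam *\<^sub>R (B ** F)"
  define CF where "CF = (lam)^2 *\<^sub>R C2 + (lam)^2 *\<^sub>R (D2 ** F)"
  define L1m where "L1m = transpose AF ** P + P ** AF + transpose CF ** CF"
  define L2m where "L2m = A ** Q + Q ** transpose A - Q ** transpose C1 ** C1 ** Q
                        + (1 / l1^2) *\<^sub>R (E ** transpose E)"
  define AT where "AT = Atil A B C1 F G lam"
  define ET where "ET = Etil E D1 G l1"
  define CT where "CT = Ctil C2 D2 F lam"
  define S where "S = (blk Q 0 0 0 :: real^('n+'n)^('n+'n))"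
  define I1 where "I1 = vblk (mat 1) (0::real^'n^'n)"
  define Jh where "Jh = vblk (mat 1) (mat 1::real^'n^'n)"
  define \<Phi> where "\<Phi> t = mexp (t *\<^sub>R AT)" for t
  define \<Psi> where "\<Psi> t = mexp (t *\<^sub>R AF)" for t
  define h where "h t = trace (transpose (CT ** \<Phi> t ** ET) ** (CT ** \<Phi> t ** ET))" for t
  define f where "f t = trace (CT ** \<Phi> t ** S ** transpose (\<Phi> t) ** transpose CT)" for t
  define g where "g t = trace (transpose G ** transpose (\<Psi> t) ** P ** \<Psi> t ** G)" for t
  define Df where "Df t = trace (CT ** \<Phi> t ** (AT ** S + S ** transpose AT) ** transpose (\<Phi> t) ** transpose CT)" for t
  define Dg where "Dg t = trace (transpose G ** transpose (\<Psi> t) ** (transpose AF ** P + P ** AF) ** \<Psi> t ** G)" for t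

  have L1': "\<And>x. x \<bullet> (L1m *v x) \<le> 0" using L1 unfolding L1m_def AF_def CF_def .
  have L2': "\<And>x. x \<bullet> (L2m *v x) \<le> 0" using L2 unfolding L2m_def .

  have SI: "S = I1 ** Q ** transpose I1"
    unfolding S_def I1_def transpose_vblk vblk_mult[of "mat 1" 0 Q] by (simp add: vblk_hblk)
  have L2I: "blk L2m 0 0 0 = I1 ** L2m ** transpose I1"
    unfolding I1_def transpose_vblk vblk_mult[of "mat 1" 0 L2m] by (simp add: vblk_hblk)
  have ATJ: "AT ** Jh = Jh ** AF"
    unfolding AT_def Jh_def Atil_def AF_def blk_vblk vblk_mult by simp
  have CTJ: "CT ** Jh = CF"
    unfolding CT_def Jh_def Ctil_def CF_def hblk_vblk by simp
  have GJ: "vblk G G = Jh ** G"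
    unfolding Jh_def vblk_mult by simp
  have key0: "AT ** S + S ** transpose AT = vblk G G ** transpose (vblk G G) + blk L2m 0 0 0 - ET ** transpose ET"
    unfolding AT_def S_def ET_def L2m_def
    by (rule key_identity[OF D1E D1D1 Qs G])
  have key: "AT ** S + S ** transpose AT = (Jh ** G) ** transpose (Jh ** G) + I1 ** L2m ** transpose I1 - ET ** transpose ET"
    using key0 unfolding GJ L2I .

  have dF: "((\<lambda>t. f t + g t) has_real_derivative Df t + Dg t) (at t)" for t
    unfolding f_def g_def Df_def Dg_def \<Phi>_def \<Psi>_def
    by (intro DERIV_add trace_deriv lyap_deriv1 lyap_deriv2)

  have Dle: "Df t + Dg t \<le> - h t" for t
  proof -
    define Y where "Y = CT ** \<Phi> t"
    define W where "W = \<Psi> t ** G"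
    define Z where "Z = CF ** W"
    have YJ: "Y ** Jh ** G = Z"
      unfolding Y_def Z_def W_def \<Phi>_def \<Psi>_def
      by (simp add: matrix_mul_assoc[symmetric] mexp_intertwine[OF ATJ]) (simp add: matrix_mul_assoc CTJ)
    have Df: "Df t = trace (Y ** (AT ** S + S ** transpose AT) ** transpose Y)"
      unfolding Df_def Y_def by (simp add: matrix_transpose_mul matrix_mul_assoc)
    also have "\<dots> = trace (Z ** transpose Z) + trace ((Y ** I1) ** L2m ** transpose (Y ** I1))
        - trace ((Y ** ET) ** transpose (Y ** ET))"
      unfolding key YJ[symmetric]
      by (simp add: mm_add_left mm_add_right mm_diff_left mm_diff_right trace_add trace_sub
          matrix_transpose_mul matrix_mul_assoc)
    finally have Df': "Df t = \<dots>" .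
    have "Dg t = trace (transpose W ** (L1m - transpose CF ** CF) ** W)"
      unfolding Dg_def W_def L1m_def by (simp add: matrix_transpose_mul matrix_mul_assoc)
    also have "\<dots> = trace (transpose W ** L1m ** transpose (transpose W)) - trace (transpose Z ** Z)"
      unfolding Z_def
      by (simp add: mm_diff_left mm_diff_right trace_sub matrix_transpose_mul matrix_mul_assoc)
    finally have Dg': "Dg t = \<dots>" .
    have h': "h t = trace ((Y ** ET) ** transpose (Y ** ET))"
      unfolding h_def Y_def by (rule trace_mul_sym)
    have "trace (transpose Z ** Z) = trace (Z ** transpose Z)" by (rule trace_mul_sym)
    moreover have "trace ((Y ** I1) ** L2m ** transpose (Y ** I1)) \<le> 0"
      by (rule trace_quad_nonpos[OF L2'])
    moreover have "trace (transpose W ** L1m ** transpose (transpose W)) \<le> 0"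
      by (rule trace_quad_nonpos[OF L1'])
    ultimately show ?thesis using Df' Dg' h' by linarith
  qed

  have Fnn: "f t + g t \<ge> 0" for t
  proof -
    have "f t = trace ((CT ** \<Phi> t ** I1) ** Q ** transpose (CT ** \<Phi> t ** I1))"
      unfolding f_def SI by (simp add: matrix_transpose_mul matrix_mul_assoc)
    moreover have "g t = trace (transpose (\<Psi> t ** G) ** P ** transpose (transpose (\<Psi> t ** G)))"
      unfolding g_def by (simp add: matrix_transpose_mul matrix_mul_assoc)
    ultimately show ?thesis
      using trace_quad_nonneg[OF Qpsd, of "CT ** \<Phi> t ** I1"] trace_quad_nonneg[OF Ppsd, of "transpose (\<Psi> t ** G)"]
      by linarith
  qed

  have cont: "continuous_on UNIV h"
    unfolding h_def \<Phi>_def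
    by (intro bounded_linear.continuous_on[OF bl_trace] bounded_bilinear.continuous_on[OF bb_mm]
        bounded_linear.continuous_on[OF bl_transpose] continuous_on_const mexp_cont)

  have "Jcost A B E C1 D1 C2 D2 F G l1 lam = (\<integral>\<^sup>+ t\<in>{0..}. ennreal (h t) \<partial>lborel)"
    unfolding Jcost_def h_def \<Phi>_def AT_def ET_def CT_def ..
  also have "\<dots> \<le> ennreal (f 0 + g 0)"
    by (rule nn_bound[OF cont _ dF Dle Fnn]) (use trace_quad_nonneg[of "mat 1"] in \<open>simp add: h_def trace_mul_sym[of "transpose _"]\<close>)
  also have "f 0 + g 0 = trace (transpose G ** P ** G) + trace (CT ** S ** transpose CT)"
    unfolding f_def g_def \<Phi>_def \<Psi>_def by (simp add: mexp_zero)
  finally show ?thesis unfolding CT_def S_def .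
qed

lemma inner_transpose_mv: "x \<bullet> (transpose A *v y) = (A *v x) \<bullet> (y::real^'n)"
  by (simp add: inner_vec_def matrix_vector_mult_def transpose_def sum_distrib_left sum_distrib_right mult_ac)
     (rule sum.swap)

lemma cmat_mv_nth: "(cmat X *v v) $ i = (\<Sum>j\<in>UNIV. complex_of_real (X$i$j) * v$j)"
  by (simp add: cmat_def matrix_vector_mult_def)

lemma eigen_re_im:
  fixes M :: "real^'n^'n"
  assumes "cmat M *v v = z *s v"
  shows "M *v (\<chi> i. Re (v$i)) = Re z *\<^sub>R (\<chi> i. Re (v$i)) - Im z *\<^sub>R (\<chi> i. Im (v$i))"
    and "M *v (\<chi> i. Im (v$i)) = Im z *\<^sub>R (\<chi> i. Re (v$i)) + Re z *\<^sub>R (\<chi> i. Im (v$i))"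
proof -
  have e: "(\<Sum>j\<in>UNIV. complex_of_real (M$i$j) * v$j) = z * v$i" for i
    using arg_cong[OF assms, of "\<lambda>w. w $ i"] by (simp add: cmat_mv_nth)
  have re: "(\<Sum>j\<in>UNIV. M$i$j * Re (v$j)) = Re z * Re (v$i) - Im z * Im (v$i)" for i
    using arg_cong[OF e[of i], of Re] by (simp add: Re_sum)
  have im: "(\<Sum>j\<in>UNIV. M$i$j * Im (v$j)) = Im z * Re (v$i) + Re z * Im (v$i)" for i
    using arg_cong[OF e[of i], of Im] by (simp add: Im_sum algebra_simps)
  show "M *v (\<chi> i. Re (v$i)) = Re z *\<^sub>R (\<chi> i. Re (v$i)) - Im z *\<^sub>R (\<chi> i. Im (v$i))"
    by (simp add: vec_eq_iff matrix_vector_mult_def re)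
  show "M *v (\<chi> i. Im (v$i)) = Im z *\<^sub>R (\<chi> i. Re (v$i)) + Re z *\<^sub>R (\<chi> i. Im (v$i))"
    by (simp add: vec_eq_iff matrix_vector_mult_def im)
qed

lemma uminus_mv: "(- S) *v x = - (S *v (x::real^'n))"
  by (simp add: matrix_vector_mult_def vec_eq_iff sum_negf)

lemma negdef_strict: "negdef S \<Longrightarrow> x \<noteq> 0 \<Longrightarrow> x \<bullet> (S *v x) < 0"
  unfolding negdef_def posdef_def by (auto simp: uminus_mv)

lemma lyap_hurwitz:
  fixes M P :: "real^'n^'n"
  assumes P: "posdef P" and N: "negdef (transpose M ** P + P ** M)"
  shows "hurwitz M"
  unfolding hurwitz_def
proof (intro allI impI, elim conjE)
  fix z :: complex and v :: "complex^'n"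
  assume v0: "v \<noteq> 0" and ev: "cmat M *v v = z *s v"
  define a where "a = (\<chi> i. Re (v$i))"
  define b where "b = (\<chi> i. Im (v$i))"
  have Ma: "M *v a = Re z *\<^sub>R a - Im z *\<^sub>R b" and Mb: "M *v b = Im z *\<^sub>R a + Re z *\<^sub>R b"
    using eigen_re_im[OF ev] unfolding a_def b_def by auto
  have Ps: "transpose P = P" using P unfolding posdef_def by simp
  have q: "x \<bullet> ((transpose M ** P + P ** M) *v x) = 2 * ((M *v x) \<bullet> (P *v x))" for x
  proof -
    have "x \<bullet> ((transpose M ** P) *v x) = (M *v x) \<bullet> (P *v x)"
      by (simp only: matrix_vector_mul_assoc[symmetric] inner_transpose_mv)
    moreover have "x \<bullet> ((P ** M) *v x) = (M *v x) \<bullet> (P *v x)"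
      using inner_transpose_mv[of x P "M *v x"] Ps
      by (simp add: matrix_vector_mul_assoc[symmetric] inner_commute)
    ultimately show ?thesis by (simp add: matrix_vector_mult_add_rdistrib inner_add_right)
  qed
  have Psym: "a \<bullet> (P *v b) = b \<bullet> (P *v a)"
    using inner_transpose_mv[of a P b] Ps by (simp add: inner_commute)
  have sum_eq: "a \<bullet> ((transpose M ** P + P ** M) *v a) + b \<bullet> ((transpose M ** P + P ** M) *v b)
      = 2 * Re z * (a \<bullet> (P *v a) + b \<bullet> (P *v b))"
    unfolding q Ma Mb using Psym
    by (simp add: inner_diff_left inner_add_left algebra_simps inner_commute)
  have ab: "a \<noteq> 0 \<or> b \<noteq> 0"
  proof (rule ccontr)
    assume "\<not> (a \<noteq> 0 \<or> b \<noteq> 0)"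
    then have "v $ i = 0" for i
      by (simp add: a_def b_def vec_eq_iff complex_eq_iff)
    with v0 show False by (simp add: vec_eq_iff)
  qed
  have negq: "x \<bullet> ((transpose M ** P + P ** M) *v x) \<le> 0" for x
    by (rule negdef_quad[OF N])
  have negq': "x \<noteq> 0 \<Longrightarrow> x \<bullet> ((transpose M ** P + P ** M) *v x) < 0" for x
    by (rule negdef_strict[OF N])
  have posq: "x \<bullet> (P *v x) \<ge> 0" for x by (rule posdef_quad[OF P])
  have posq': "x \<noteq> 0 \<Longrightarrow> x \<bullet> (P *v x) > 0" for x using P unfolding posdef_def by auto
  have lt: "a \<bullet> ((transpose M ** P + P ** M) *v a) + b \<bullet> ((transpose M ** P + P ** M) *v b) < 0"
    using ab negq negq' by (meson add_neg_nonpos add_nonpos_neg)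
  have gt: "a \<bullet> (P *v a) + b \<bullet> (P *v b) > 0"
    using ab posq posq' by (meson add_pos_nonneg add_nonneg_pos)
  from lt gt sum_eq show "Re z < 0"
    by (smt (verit) mult_nonneg_nonneg)
qed

lemma quad_lyap:
  fixes M P :: "real^'n^'n"
  assumes Ps: "transpose P = P"
  shows "x \<bullet> ((transpose M ** P + P ** M) *v x) = 2 * ((M *v x) \<bullet> (P *v x))"
proof -
  have "x \<bullet> ((transpose M ** P) *v x) = (M *v x) \<bullet> (P *v x)"
    by (simp only: matrix_vector_mul_assoc[symmetric] inner_transpose_mv)
  moreover have "x \<bullet> ((P ** M) *v x) = (M *v x) \<bullet> (P *v x)"
    using inner_transpose_mv[of x P "M *v x"] Ps
    by (simp add: matrix_vector_mul_assoc[symmetric] inner_commute)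
  ultimately show ?thesis by (simp add: matrix_vector_mult_add_rdistrib inner_add_right)
qed

lemma quad_lyap2:
  fixes M Q :: "real^'n^'n"
  assumes Qs: "transpose Q = Q"
  shows "y \<bullet> ((M ** Q + Q ** transpose M) *v y) = 2 * ((M *v (Q *v y)) \<bullet> y)"
proof -
  have "y \<bullet> ((M ** Q) *v y) = (M *v (Q *v y)) \<bullet> y"
    by (simp add: matrix_vector_mul_assoc[symmetric] inner_commute)
  moreover have "y \<bullet> ((Q ** transpose M) *v y) = (M *v (Q *v y)) \<bullet> y"
  proof -
    have "y \<bullet> ((Q ** transpose M) *v y) = y \<bullet> (transpose Q *v (transpose M *v y))"
      by (simp only: matrix_vector_mul_assoc[symmetric] Qs)
    also have "\<dots> = (Q *v y) \<bullet> (transpose M *v y)" by (rule inner_transpose_mv)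
    also have "\<dots> = (M *v (Q *v y)) \<bullet> y" by (rule inner_transpose_mv)
    finally show ?thesis .
  qed
  ultimately show ?thesis by (simp add: matrix_vector_mult_add_rdistrib inner_add_right)
qed

lemma lyap_hurwitz2:
  fixes M Q :: "real^'n^'n"
  assumes Q: "posdef Q" and N: "negdef (M ** Q + Q ** transpose M)"
  shows "hurwitz M"
proof -
  have Qs: "transpose Q = Q" using Q unfolding posdef_def by simp
  have "\<forall>x. Q *v x = 0 \<longrightarrow> x = 0"
  proof (intro allI impI)
    fix x assume "Q *v x = 0"
    then have "x \<bullet> (Q *v x) = 0" by simp
    then show "x = 0" using Q unfolding posdef_def by (metis less_irrefl)
  qed
  then obtain R where RQ: "R ** Q = mat 1" using matrix_left_invertible_ker by blast
  then have QR: "Q ** R = mat 1" using matrix_left_right_inverse by blast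
  have Rs: "transpose R = R"
  proof -
    have "transpose R ** Q = mat 1"
      using arg_cong[OF QR, of transpose] Qs by (simp add: matrix_transpose_mul)
    then have "transpose R = transpose R ** (Q ** R)" using QR by simp
    also have "\<dots> = R" using \<open>transpose R ** Q = mat 1\<close> by (simp add: matrix_mul_assoc)
    finally show ?thesis .
  qed
  have QRv: "Q *v (R *v x) = x" for x
    using QR by (simp add: matrix_vector_mul_assoc)
  have Rv0: "x \<noteq> 0 \<Longrightarrow> R *v x \<noteq> 0" for x using QRv[of x] by auto
  have Rpos: "posdef R"
    unfolding posdef_def
  proof (intro conjI allI impI Rs)
    fix x :: "real^'n" assume "x \<noteq> 0"
    then have "R *v x \<noteq> 0" by (rule Rv0)
    then have "(R *v x) \<bullet> (Q *v (R *v x)) > 0" using Q unfolding posdef_def by blast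
    then show "x \<bullet> (R *v x) > 0" using QRv[of x] by (simp add: inner_commute)
  qed
  have Nneg: "negdef (transpose M ** R + R ** M)"
    unfolding negdef_def posdef_def
  proof (intro conjI allI impI)
    show "transpose (- (transpose M ** R + R ** M)) = - (transpose M ** R + R ** M)"
      by (simp only: transpose_uminus transpose_add matrix_transpose_mul Rs transpose_transpose add.commute)
  next
    fix x :: "real^'n" assume "x \<noteq> 0"
    define y where "y = R *v x"
    have y0: "y \<noteq> 0" unfolding y_def by (rule Rv0[OF \<open>x \<noteq> 0\<close>])
    have xy: "x = Q *v y" unfolding y_def by (simp add: QRv)
    have "x \<bullet> ((transpose M ** R + R ** M) *v x) = y \<bullet> ((M ** Q + Q ** transpose M) *v y)"
      unfolding quad_lyap[OF Rs] quad_lyap2[OF Qs] using xy by (simp add: y_def inner_commute)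
    also have "\<dots> < 0" by (rule negdef_strict[OF N y0])
    finally have "x \<bullet> ((transpose M ** R + R ** M) *v x) < 0" .
    then show "x \<bullet> (- (transpose M ** R + R ** M) *v x) > 0"
      unfolding uminus_mv inner_minus_right by simp
  qed
  show ?thesis by (rule lyap_hurwitz[OF Rpos Nneg])
qed

lemma atil_hurwitz:
  fixes A :: "real^'n^'n" and B :: "real^'m^'n" and C1 :: "real^'n^'r" and F :: "real^'n^'m" and G :: "real^'r^'n"
  assumes HF: "hurwitz (A + lam *\<^sub>R (B ** F))" and HG: "hurwitz (A + G ** C1)"
  shows "hurwitz (Atil A B C1 F G lam)"
  unfolding hurwitz_def
proof (intro allI impI, elim conjE)
  fix z :: complex and v :: "complex^('n+'n)"
  assume v0: "v \<noteq> 0" and ev: "cmat (Atil A B C1 F G lam) *v v = z *s v"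
  define K where "K = lam *\<^sub>R (B ** F)"
  define H where "H = G ** C1"
  define v1 where "v1 = (\<chi> i. v $ Inl i)"
  define v2 where "v2 = (\<chi> i. v $ Inr i)"
  have e: "(cmat (Atil A B C1 F G lam) *v v) $ k = z * v $ k" for k
    using arg_cong[OF ev, of "\<lambda>w. w $ k"] by simp
  have e1: "(\<Sum>j\<in>UNIV. complex_of_real (A$i$j) * v1$j) + (\<Sum>j\<in>UNIV. complex_of_real (K$i$j) * v2$j) = z * v1 $ i" for i
    using e[of "Inl i"] by (simp add: cmat_mv_nth sum_UNIV_Plus Atil_def K_def v1_def v2_def)
  have e2: "(\<Sum>j\<in>UNIV. - complex_of_real (H$i$j) * v1$j) + (\<Sum>j\<in>UNIV. complex_of_real (A$i$j + H$i$j + K$i$j) * v2$j) = z * v2 $ i" for i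
    using e[of "Inr i"] by (simp add: cmat_mv_nth sum_UNIV_Plus Atil_def K_def H_def v1_def v2_def algebra_simps sum.distrib sum_negf)
  show "Re z < 0"
  proof (cases "v2 - v1 = 0")
    case False
    have "cmat (A + G ** C1) *v (v2 - v1) = z *s (v2 - v1)"
    proof -
      have "(cmat (A + G ** C1) *v (v2 - v1)) $ i = (z *s (v2 - v1)) $ i" for i
      proof -
        have "(cmat (A + G ** C1) *v (v2 - v1)) $ i
           = ((\<Sum>j\<in>UNIV. - complex_of_real (H$i$j) * v1$j) + (\<Sum>j\<in>UNIV. complex_of_real (A$i$j + H$i$j + K$i$j) * v2$j))
           - ((\<Sum>j\<in>UNIV. complex_of_real (A$i$j) * v1$j) + (\<Sum>j\<in>UNIV. complex_of_real (K$i$j) * v2$j))"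
          by (simp add: cmat_mv_nth H_def algebra_simps sum.distrib sum_subtractf sum_negf)
        also have "\<dots> = z * v2 $ i - z * v1 $ i" by (simp only: e1 e2)
        finally show ?thesis by (simp add: algebra_simps)
      qed
      then show ?thesis by (simp add: vec_eq_iff)
    qed
    then show ?thesis using HG False unfolding hurwitz_def by blast
  next
    case True
    then have v12: "v2 = v1" by simp
    have v10: "v1 \<noteq> 0"
    proof
      assume "v1 = 0"
      then have "v $ k = 0" for k using v12
        by (cases k) (auto simp: v1_def v2_def vec_eq_iff)
      with v0 show False by (simp add: vec_eq_iff)
    qed
    have "cmat (A + lam *\<^sub>R (B ** F)) *v v1 = z *s v1"
    proof -
      have "(cmat (A + lam *\<^sub>R (B ** F)) *v v1) $ i = (z *s v1) $ i" for i
      proof -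
        have "(cmat (A + lam *\<^sub>R (B ** F)) *v v1) $ i
           = (\<Sum>j\<in>UNIV. complex_of_real (A$i$j) * v1$j) + (\<Sum>j\<in>UNIV. complex_of_real (K$i$j) * v2$j)"
          by (simp add: cmat_mv_nth K_def v12 algebra_simps sum.distrib)
        also have "\<dots> = z * v1 $ i" by (rule e1)
        finally show ?thesis by simp
      qed
      then show ?thesis by (simp add: vec_eq_iff)
    qed
    then show ?thesis using HF v10 unfolding hurwitz_def by blast
  qed
qed

lemma hblk_blk: "hblk a b ** blk p q r s = hblk (a ** p + b ** r) (a ** q + b ** s)"
  by (rule vec_sum_eqI2) (simp_all add: matrix_matrix_mult_def sum_UNIV_Plus)

lemma transpose_hblk: "transpose (hblk x y) = vblk (transpose x) (transpose y)"
  by (rule vec_sum_eqI) (simp_all add: transpose_def)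

lemma inner_transpose_mv':
  fixes A :: "real^'k^'n" and x :: "real^'k" and y :: "real^'n"
  shows "x \<bullet> (transpose A *v y) = (A *v x) \<bullet> y"
  by (simp add: inner_vec_def matrix_vector_mult_def transpose_def sum_distrib_left sum_distrib_right mult_ac)
     (rule sum.swap)

lemma mv_scaleR: "(c *\<^sub>R M) *v x = c *\<^sub>R (M *v (x::real^'n))"
  by (simp add: vec_eq_iff matrix_vector_mult_def sum_distrib_left mult_ac)

lemma gram_psd: fixes C :: "real^'n^'p" shows "x \<bullet> ((transpose C ** C) *v x) \<ge> 0"
proof -
  have "x \<bullet> (transpose C *v (C *v x)) = (C *v x) \<bullet> (C *v x)" by (rule inner_transpose_mv')
  then show ?thesis by (simp only: matrix_vector_mul_assoc[symmetric]) simp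
qed

lemma negdef_le:
  fixes N X :: "real^'n^'n"
  assumes N: "negdef N" and Xs: "transpose X = X" and le: "\<And>x. x \<bullet> (X *v x) \<le> x \<bullet> (N *v x)"
  shows "negdef X"
  unfolding negdef_def posdef_def
proof (intro conjI allI impI)
  show "transpose (- X) = - X" using Xs by (simp add: transpose_uminus)
next
  fix x :: "real^'n" assume "x \<noteq> 0"
  with negdef_strict[OF N] le[of x] have "x \<bullet> (X *v x) < 0" by (meson le_less_trans)
  then show "x \<bullet> (- X *v x) > 0" by (simp add: uminus_mv)
qed

lemma AF_hurwitz:
  fixes AF P :: "real^'n^'n" and CF :: "real^'n^'p"
  assumes P: "posdef P" and N: "negdef (transpose AF ** P + P ** AF + transpose CF ** CF)"
  shows "hurwitz AF"
proof (rule lyap_hurwitz[OF P negdef_le[OF N]])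
  have Ps: "transpose P = P" using P unfolding posdef_def by simp
  show "transpose (transpose AF ** P + P ** AF) = transpose AF ** P + P ** AF"
    by (simp add: transpose_add matrix_transpose_mul Ps add.commute)
  fix x
  show "x \<bullet> ((transpose AF ** P + P ** AF) *v x) \<le> x \<bullet> ((transpose AF ** P + P ** AF + transpose CF ** CF) *v x)"
    using gram_psd[of x CF] by (simp add: matrix_vector_mult_add_rdistrib inner_add_right)
qed

lemma AG_hurwitz:
  fixes A Q :: "real^'n^'n" and C1 :: "real^'n^'r" and E :: "real^'q^'n"
  assumes Q: "posdef Q"
    and N: "negdef (A ** Q + Q ** transpose A - Q ** transpose C1 ** C1 ** Q + (1 / l^2) *\<^sub>R (E ** transpose E))"
  shows "hurwitz (A + (- (Q ** transpose C1)) ** C1)"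
proof (rule lyap_hurwitz2[OF Q negdef_le[OF N]])
  have Qs: "transpose Q = Q" using Q unfolding posdef_def by simp
  let ?M = "A + (- (Q ** transpose C1)) ** C1"
  have eq: "?M ** Q + Q ** transpose ?M
     = (A ** Q + Q ** transpose A - Q ** transpose C1 ** C1 ** Q + (1 / l^2) *\<^sub>R (E ** transpose E))
       - (transpose (C1 ** Q) ** (C1 ** Q) + (1 / l^2) *\<^sub>R (transpose (transpose E) ** transpose E))"
    by (simp add: mm_add_left mm_add_right mm_uminus_left mm_uminus_right transpose_add transpose_uminus
        mm_diff_left mm_diff_right transpose_diff matrix_transpose_mul Qs matrix_mul_assoc algebra_simps)
  show "transpose (?M ** Q + Q ** transpose ?M) = ?M ** Q + Q ** transpose ?M"
    by (simp only: transpose_add matrix_transpose_mul Qs transpose_transpose add.commute)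
  fix x
  have "x \<bullet> ((1 / l^2) *\<^sub>R (transpose (transpose E) ** transpose E) *v x) \<ge> 0"
    using gram_psd[of x "transpose E"] unfolding mv_scaleR inner_scaleR_right
    by (intro mult_nonneg_nonneg) auto
  moreover have "x \<bullet> ((transpose (C1 ** Q) ** (C1 ** Q)) *v x) \<ge> 0" by (rule gram_psd)
  ultimately show "x \<bullet> ((?M ** Q + Q ** transpose ?M) *v x) \<le> x \<bullet> ((A ** Q + Q ** transpose A - Q ** transpose C1 ** C1 ** Q + (1 / l^2) *\<^sub>R (E ** transpose E)) *v x)"
    unfolding eq by (simp add: matrix_vector_mult_diff_rdistrib matrix_vector_mult_add_rdistrib inner_diff_right inner_add_right)
qed

theorem lemma9:
  fixes A :: "real^'n^'n" and B :: "real^'m^'n" and E :: "real^'q^'n"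
    and C1 :: "real^'n^'r" and D1 :: "real^'q^'r"
    and C2 :: "real^'n^'p" and D2 :: "real^'m^'p"
    and F :: "real^'n^'m" and Q :: "real^'n^'n" and P :: "nat \<Rightarrow> real^'n^'n"
    and M :: nat and lam :: "nat \<Rightarrow> real" and \<gamma> :: real
  assumes stab: "stabilizable A B" and det: "detectable C1 A"
    and M: "M \<ge> 1"
    and lam_pos: "0 < lam 1"
    and lam_mono: "\<And>i j. 1 \<le> i \<Longrightarrow> i \<le> j \<Longrightarrow> j \<le> M \<Longrightarrow> lam i \<le> lam j"
    and gamma: "\<gamma> > 0"
    and D1E: "D1 ** transpose E = 0" and D2C2: "transpose D2 ** C2 = 0"
    and D1D1: "D1 ** transpose D1 = mat 1" and D2D2: "transpose D2 ** D2 = mat 1"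
    and Ppos: "\<And>i. i \<in> {1..M} \<Longrightarrow> posdef (P i)"
    and Qpos: "posdef Q"
    and LMI1: "\<And>i. i \<in> {1..M} \<Longrightarrow> negdef
        (transpose (A + lam i *\<^sub>R (B ** F)) ** P i + P i ** (A + lam i *\<^sub>R (B ** F))
         + transpose ((lam i)^2 *\<^sub>R C2 + (lam i)^2 *\<^sub>R (D2 ** F))
           ** ((lam i)^2 *\<^sub>R C2 + (lam i)^2 *\<^sub>R (D2 ** F)))"
    and LMI2: "negdef (A ** Q + Q ** transpose A - Q ** transpose C1 ** C1 ** Q
                        + (1 / (lam 1)^2) *\<^sub>R (E ** transpose E))"
    and trbound: "(\<Sum>i=1..M. trace (C1 ** Q ** P i ** Q ** transpose C1)
                              + (lam i)^4 * trace (C2 ** Q ** transpose C2)) < \<gamma>"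
  shows "(\<forall>i\<in>{1..M}. hurwitz (Atil A B C1 F (- (Q ** transpose C1)) (lam i)))
    \<and> (\<Sum>i=1..M. Jcost A B E C1 D1 C2 D2 F (- (Q ** transpose C1)) (lam 1) (lam i)) < ennreal \<gamma>"
proof
  have Qs: "transpose Q = Q" using Qpos unfolding posdef_def by simp
  show "\<forall>i\<in>{1..M}. hurwitz (Atil A B C1 F (- (Q ** transpose C1)) (lam i))"
  proof
    fix i assume i: "i \<in> {1..M}"
    show "hurwitz (Atil A B C1 F (- (Q ** transpose C1)) (lam i))"
      by (rule atil_hurwitz[OF AF_hurwitz[OF Ppos[OF i] LMI1[OF i]] AG_hurwitz[OF Qpos LMI2]])
  qed
  define b where "b i = trace (C1 ** Q ** P i ** Q ** transpose C1) + (lam i)^4 * trace (C2 ** Q ** transpose C2)" for i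
  have b0: "b i \<ge> 0" if i: "i \<in> {1..M}" for i
  proof -
    have "trace (C1 ** Q ** P i ** transpose (C1 ** Q)) \<ge> 0"
      by (rule trace_quad_nonneg[OF posdef_quad[OF Ppos[OF i]]])
    moreover have "trace (C2 ** Q ** transpose C2) \<ge> 0"
      by (rule trace_quad_nonneg[OF posdef_quad[OF Qpos]])
    ultimately show ?thesis unfolding b_def
      by (simp add: matrix_transpose_mul Qs matrix_mul_assoc)
  qed
  have Jle: "Jcost A B E C1 D1 C2 D2 F (- (Q ** transpose C1)) (lam 1) (lam i) \<le> ennreal (b i)"
    if i: "i \<in> {1..M}" for i
  proof -
    have "Jcost A B E C1 D1 C2 D2 F (- (Q ** transpose C1)) (lam 1) (lam i) \<le>
      ennreal (trace (transpose (- (Q ** transpose C1)) ** P i ** (- (Q ** transpose C1)))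
        + trace (Ctil C2 D2 F (lam i) ** blk Q 0 0 0 ** transpose (Ctil C2 D2 F (lam i))))"
      by (rule cost_bound[OF D1E D1D1 Qs refl posdef_quad[OF Qpos] posdef_quad[OF Ppos[OF i]]
            negdef_quad[OF LMI1[OF i]] negdef_quad[OF LMI2]])
    also have "trace (transpose (- (Q ** transpose C1)) ** P i ** (- (Q ** transpose C1)))
        = trace (C1 ** Q ** P i ** Q ** transpose C1)"
      by (simp add: transpose_uminus matrix_transpose_mul Qs mm_uminus_left mm_uminus_right matrix_mul_assoc)
    also have "Ctil C2 D2 F (lam i) ** blk Q 0 0 0 ** transpose (Ctil C2 D2 F (lam i))
        = (lam i)^4 *\<^sub>R (C2 ** Q ** transpose C2)"
      unfolding Ctil_def hblk_blk transpose_hblk hblk_vblk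
      by (simp add: transpose_scalar mm_scaleR_left mm_scaleR_right matrix_mul_assoc)
    finally show ?thesis unfolding b_def by (simp add: trace_scaleR)
  qed
  have "(\<Sum>i=1..M. Jcost A B E C1 D1 C2 D2 F (- (Q ** transpose C1)) (lam 1) (lam i))
      \<le> (\<Sum>i=1..M. ennreal (b i))"
    by (rule sum_mono) (rule Jle)
  also have "\<dots> = ennreal (\<Sum>i=1..M. b i)"
    by (rule sum_ennreal) (rule b0)
  also have "\<dots> < ennreal \<gamma>"
    by (rule ennreal_lessI[OF gamma]) (use trbound in \<open>simp add: b_def\<close>)
  finally show "(\<Sum>i=1..M. Jcost A B E C1 D1 C2 D2 F (- (Q ** transpose C1)) (lam 1) (lam i)) < ennreal \<gamma>" .
qed

end
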